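(* Let $\Lambda,\Lambda':\mathbb{R}\to[0,1]$ be decreasing functions. Then, on $L^\infty$: (a) if $\Lambda\ge\Lambda'$ pointwise, then $\mathrm{ES}_\Lambda\ge\mathrm{ES}_{\Lambda'}$; (b) $\mathrm{ES}_\Lambda$ is monotone: $\mathrm{ES}_\Lambda(X)\ge\mathrm{ES}_\Lambda(Y)$ whenever $X\ge Y$ a.s.; (c) $\mathrm{ES}_\Lambda\ge\mathrm{VaR}_\Lambda$; (d) $\mathrm{ES}_\Lambda$ is quasi-convex; (e) $\mathrm{ES}_\Lambda$ is normalized: $\mathrm{ES}_\Lambda(t)=t$ for all constants $t\in\mathbb{R}$; (f) $\mathrm{ES}_\Lambda$ is cash subadditive: $\mathrm{ES}_\Lambda(X+m)\le\mathrm{ES}_\Lambda(X)+m$ for all $X\in L^\infty$, $m\ge0$; (g) $\mathrm{ES}_\Lambda$ is SSD-consistent: $\mathrm{ES}_\Lambda(X)\ge\mathrm{ES}_\Lambda(Y)$ whenever $X\succeq_{\rm icx}Y$; (h) $\mathrm{ES}_\Lambda$ is quasi-concave in mixtures; (i) if $\Lambda$ takes values in $[0,1)$, then $\mathrm{ES}_\Lambda$ is $L^1$-continuous: $\mathrm{ES}_\Lambda(X_n)\to\mathrm{ES}_\Lambda(X)$ whenever $X,X_1,X_2,\dots\in L^\infty$ and $X_n\to X$ in $L^1$.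
   Context: $(\Omega,\mathcal F,\mathbb P)$ is an atomless probability space, $L^0$ all random variables, $L^1$ integrable ones, $L^\infty$ essentially bounded ones; "decreasing" is weak; $\wedge=\min$. For $\alpha\in[0,1]$, $X\in L^0$: $\mathrm{VaR}_\alpha(X)=\inf\{x\in\mathbb{R}:\mathbb P(X\le x)\ge\alpha\}$ ($\inf\mathbb{R}=-\infty$). For $X\in L^\infty$: $\mathrm{ES}_\alpha(X)=\frac{1}{1-\alpha}\int_\alpha^1\mathrm{VaR}_\beta(X)\,\mathrm d\beta$ for $\alpha<1$, $\mathrm{ES}_1(X)=\mathrm{VaR}_1(X)$. For decreasing $\Lambda:\mathbb{R}\to[0,1]$: $\mathrm{VaR}_\Lambda(X)=\inf\{x\in\mathbb{R}:\mathbb P(X\le x)\ge\Lambda(x)\}$ and $\mathrm{ES}_\Lambda(X)=\sup_{x\in\mathbb{R}}\left(\mathrm{ES}_{\Lambda(x)}(X)\wedge x\right)$, $X\in L^\infty$. Quasi-convex: $\rho(\gamma X+(1-\gamma)Y)\le\max\{\rho(X),\rho(Y)\}$ for $\gamma\in[0,1]$. $X\succeq_{\rm icx}Y$ means $\mathbb E[f(X)]\ge\mathbb E[f(Y)]$ for all increasing convex $f:\mathbb{R}\to\mathbb{R}$. A law-invariant $\rho$ is quasi-concave in mixtures if $F\mapsto\rho(X_F)$ is quasi-concave on the set of compactly supported distributions on $\mathbb{R}$ (under mixtures $\gamma F+(1-\gamma)G$), where $X_F$ denotes a random variable with distribution $F$. *)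

theory Defs
  imports "HOL-Probability.Probability"
begin

definition atomless :: "'a measure \<Rightarrow> bool" where
  "atomless M \<longleftrightarrow> (\<forall>A\<in>sets M. measure M A > 0 \<longrightarrow>
     (\<exists>B\<in>sets M. B \<subseteq> A \<and> 0 < measure M B \<and> measure M B < measure M A))"

definition Linf :: "'a measure \<Rightarrow> ('a \<Rightarrow> real) set" where
  "Linf M = {X. X \<in> borel_measurable M \<and> (\<exists>C. AE \<omega> in M. \<bar>X \<omega>\<bar> \<le> C)}"

definition cdf_of :: "'a measure \<Rightarrow> ('a \<Rightarrow> real) \<Rightarrow> real \<Rightarrow> real" where
  "cdf_of M X x = measure M {\<omega> \<in> space M. X \<omega> \<le> x}"

text \<open>VaR, extended-real valued (Inf of the empty set is +infinity, Inf of all reals is -infinity).\<close>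
definition VaR :: "'a measure \<Rightarrow> real \<Rightarrow> ('a \<Rightarrow> real) \<Rightarrow> ereal" where
  "VaR M \<alpha> X = Inf (ereal ` {x. cdf_of M X x \<ge> \<alpha>})"

text \<open>ES for L-infinity random variables (VaR is finite for beta in (0,1] there;
  the value at beta = 0 is irrelevant for the Lebesgue integral).\<close>
definition ES :: "'a measure \<Rightarrow> real \<Rightarrow> ('a \<Rightarrow> real) \<Rightarrow> real" where
  "ES M \<alpha> X = (if \<alpha> < 1
      then (LBINT \<beta>:{\<alpha>..1}. real_of_ereal (VaR M \<beta> X)) / (1 - \<alpha>)
      else real_of_ereal (VaR M 1 X))"

definition VaR_Lambda :: "'a measure \<Rightarrow> (real \<Rightarrow> real) \<Rightarrow> ('a \<Rightarrow> real) \<Rightarrow> ereal" where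
  "VaR_Lambda M \<Lambda> X = Inf (ereal ` {x. cdf_of M X x \<ge> \<Lambda> x})"

definition ES_Lambda :: "'a measure \<Rightarrow> (real \<Rightarrow> real) \<Rightarrow> ('a \<Rightarrow> real) \<Rightarrow> real" where
  "ES_Lambda M \<Lambda> X = (SUP x. min (ES M (\<Lambda> x) X) x)"

definition icx_ge :: "'a measure \<Rightarrow> ('a \<Rightarrow> real) \<Rightarrow> ('a \<Rightarrow> real) \<Rightarrow> bool" where
  "icx_ge M X Y \<longleftrightarrow> (\<forall>f :: real \<Rightarrow> real. mono f \<and> convex_on UNIV f \<longrightarrow>
      (\<integral>\<omega>. f (X \<omega>) \<partial>M) \<ge> (\<integral>\<omega>. f (Y \<omega>) \<partial>M))"

end

theory Submission
  imports Defs
begin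

definition EP :: "'a measure \<Rightarrow> ('a \<Rightarrow> real) \<Rightarrow> real \<Rightarrow> real" where
  "EP M X t = (\<integral>\<omega>. max (X \<omega> - t) 0 \<partial>M)"

definition qf :: "'a measure \<Rightarrow> ('a \<Rightarrow> real) \<Rightarrow> real \<Rightarrow> real" where
  "qf M X \<beta> = Inf {x. \<beta> \<le> cdf_of M X x}"

abbreviation QQ :: "real measure" where
  "QQ \<equiv> restrict_space lborel {0<..<1::real}"

lemma QQ_prob: "prob_space QQ"
  by (auto simp add: emeasure_restrict_space space_restrict_space intro!: prob_spaceI)

locale bdd_rv = prob_space M for M :: "'a measure" +
  fixes X :: "'a \<Rightarrow> real" and C :: real
  assumes Xm[measurable]: "X \<in> borel_measurable M"
    and bnd: "AE \<omega> in M. \<bar>X \<omega>\<bar> \<le> C"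
begin

abbreviation "\<mu> \<equiv> distr M borel X"
abbreviation "F \<equiv> cdf_of M X"

lemma mu_rd: "real_distribution \<mu>"
  by (rule real_distribution_distr) simp

lemma F_eq: "F x = cdf \<mu> x"
  unfolding cdf_of_def cdf_def
  by (subst measure_distr) (auto intro!: arg_cong[where f="measure M"])

lemma F_mono: "x \<le> y \<Longrightarrow> F x \<le> F y"
  unfolding F_eq using real_distribution.finite_borel_measure_M[OF mu_rd]
  by (simp add: finite_borel_measure.cdf_nondecreasing)

lemma F_nonneg: "0 \<le> F x" unfolding cdf_of_def by simp
lemma F_le1: "F x \<le> 1" unfolding cdf_of_def by simp

lemma F_low: assumes "x < - C" shows "F x = 0"
proof -
  have "AE \<omega> in M. \<omega> \<notin> {\<omega> \<in> space M. X \<omega> \<le> x}"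
    using bnd by (rule AE_mp) (use assms in \<open>auto intro!: AE_I2\<close>)
  then have "prob {\<omega> \<in> space M. X \<omega> \<le> x} = 0"
    by (subst prob_eq_0) simp_all
  then show ?thesis unfolding cdf_of_def .
qed

lemma F_high: assumes "C \<le> x" shows "F x = 1"
proof -
  have "AE \<omega> in M. \<omega> \<in> {\<omega> \<in> space M. X \<omega> \<le> x}"
    using bnd by (rule AE_mp) (use assms in \<open>auto intro!: AE_I2\<close>)
  then have "prob {\<omega> \<in> space M. X \<omega> \<le> x} = 1"
    by (subst prob_eq_1) simp_all
  then show ?thesis unfolding cdf_of_def .
qed

lemma F_rcont: "continuous (at_right x) F"
  unfolding F_eq[abs_def] using real_distribution.finite_borel_measure_M[OF mu_rd]
  by (simp add: finite_borel_measure.cdf_is_right_cont)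

lemma S_ne: assumes "\<beta> \<le> 1" shows "{x. \<beta> \<le> F x} \<noteq> {}"
proof -
  have "F C = 1" by (rule F_high) simp
  then have "C \<in> {x. \<beta> \<le> F x}" using assms by simp
  then show ?thesis by blast
qed

lemma S_bdd: assumes "0 < \<beta>" shows "bdd_below {x. \<beta> \<le> F x}"
proof (rule bdd_belowI[of _ "-C"])
  fix x assume x: "x \<in> {x. \<beta> \<le> F x}"
  show "- C \<le> x"
  proof (rule ccontr)
    assume "\<not> - C \<le> x"
    then have "F x = 0" by (intro F_low) simp
    then show False using x assms by simp
  qed
qed

lemma qf_Galois: assumes "0 < \<beta>" "\<beta> \<le> 1" shows "\<beta> \<le> F x \<longleftrightarrow> qf M X \<beta> \<le> x"
proof
  show "\<beta> \<le> F x \<Longrightarrow> qf M X \<beta> \<le> x"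
    unfolding qf_def by (auto intro!: cInf_lower S_bdd assms)
  assume *: "qf M X \<beta> \<le> x"
  have mF: "mono F" using F_mono by (auto intro: monoI)
  have "\<beta> \<le> (INF s\<in>{x. \<beta> \<le> F x}. F s)"
    by (rule cINF_greatest[OF S_ne[OF assms(2)]]) auto
  also have "\<dots> = F (qf M X \<beta>)"
    unfolding qf_def using continuous_at_Inf_mono[OF mF F_rcont S_ne[OF assms(2)] S_bdd[OF assms(1)]] ..
  also have "\<dots> \<le> F x"
    using * by (rule F_mono)
  finally show "\<beta> \<le> F x" .
qed

lemma qf_bounds: assumes "0 < \<beta>" "\<beta> \<le> 1" shows "- C \<le> qf M X \<beta>" "qf M X \<beta> \<le> C"
proof -
  show "qf M X \<beta> \<le> C" using qf_Galois[OF assms, of C] F_high[of C] assms by simp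
  show "- C \<le> qf M X \<beta>"
  proof (rule ccontr)
    assume "\<not> - C \<le> qf M X \<beta>"
    then have y: "qf M X \<beta> < -C" by simp
    have "\<beta> \<le> F (qf M X \<beta>)" using qf_Galois[OF assms, of "qf M X \<beta>"] by simp
    moreover have "F (qf M X \<beta>) = 0" using F_low[OF y] .
    ultimately show False using assms by simp
  qed
qed

lemma qf_mono: assumes "0 < \<beta>" "\<beta> \<le> \<beta>'" "\<beta>' \<le> 1" shows "qf M X \<beta> \<le> qf M X \<beta>'"
proof -
  have "\<beta>' \<le> F (qf M X \<beta>')" using qf_Galois[of \<beta>'] assms by simp
  then show ?thesis using qf_Galois[of \<beta> "qf M X \<beta>'"] assms by simp
qed

lemma VaR_eq: assumes "0 < \<beta>" "\<beta> \<le> 1" shows "VaR M \<beta> X = ereal (qf M X \<beta>)"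
  unfolding VaR_def qf_def
  by (rule ereal_Inf'[OF S_bdd[OF assms(1)] S_ne[OF assms(2)], symmetric])

end

context bdd_rv
begin

lemma cd: "cdf_distribution \<mu>"
  unfolding cdf_distribution_def using mu_rd .

lemma qf_I: "qf M X = (\<lambda>\<beta>. Inf {x. \<beta> \<le> cdf \<mu> x})"
  unfolding qf_def F_eq[symmetric] ..

lemma qf_meas[measurable]: "qf M X \<in> borel_measurable QQ"
proof -
  have "(\<lambda>\<beta>. Inf {x. \<beta> \<le> cdf \<mu> x}) \<in> borel_measurable (restrict_space borel {0<..<1})"
    by (rule cdf_distribution.measurable_CI[OF cd])
  then show ?thesis unfolding qf_I
    by (subst measurable_cong_sets[OF sets_restrict_space_cong[OF sets_lborel] refl])
qed

lemma qtrans: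
  fixes g :: "real \<Rightarrow> real"
  assumes g[measurable]: "g \<in> borel_measurable borel"
  shows "(\<integral>\<omega>. g (X \<omega>) \<partial>M) = (\<integral>\<beta>. g (qf M X \<beta>) \<partial>QQ)"
proof -
  have "(\<integral>\<omega>. g (X \<omega>) \<partial>M) = integral\<^sup>L \<mu> g"
    using integral_distr[of X M borel g] by simp
  also have "\<dots> = integral\<^sup>L (distr QQ borel (qf M X)) g"
    unfolding qf_I cdf_distribution.distr_I_eq_M[OF cd] ..
  also have "\<dots> = (\<integral>\<beta>. g (qf M X \<beta>) \<partial>QQ)"
    by (rule integral_distr) auto
  finally show ?thesis .
qed

lemma EP_q: "EP M X t = (\<integral>\<beta>. max (qf M X \<beta> - t) 0 \<partial>QQ)"
  unfolding EP_def by (rule qtrans) measurable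

end

context bdd_rv
begin

interpretation Q: prob_space QQ by (rule QQ_prob)

lemma Cnn: "0 \<le> C"
proof -
  have "AE \<omega> in M. 0 \<le> C" using bnd by eventually_elim auto
  then show ?thesis by simp
qed

lemma ind_meas[measurable]: "(\<lambda>\<beta>::real. indicator {a<..<b} \<beta> :: real) \<in> borel_measurable QQ"
  by (rule measurable_restrict_space1) simp

lemma QQ_int:
  fixes g :: "real \<Rightarrow> real"
  assumes "g \<in> borel_measurable QQ" "\<And>\<beta>. 0 < \<beta> \<Longrightarrow> \<beta> < 1 \<Longrightarrow> \<bar>g \<beta>\<bar> \<le> B"
  shows "integrable QQ g"
  by (rule Q.integrable_const_bound[where B=B]) (use assms in \<open>auto intro!: AE_I2 simp: space_restrict_space\<close>)

lemma qf_bnd: "0 < \<beta> \<Longrightarrow> \<beta> \<le> 1 \<Longrightarrow> \<bar>qf M X \<beta>\<bar> \<le> C"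
  using qf_bounds[of \<beta>] by auto

lemma ind_int: "(\<integral>\<beta>. indicator {a<..<1} \<beta> * t \<partial>QQ) = (1 - a) * t" if "0 \<le> a" "a < 1" for a t
proof -
  have "(\<integral>\<beta>. indicator {a<..<1} \<beta> * t \<partial>QQ) = measure QQ ({a<..<1} \<inter> space QQ) * t"
    by simp
  also have "{a<..<1} \<inter> space QQ = {a<..<1::real}" using that by (auto simp: space_restrict_space)
  also have "measure QQ {a<..<1} = measure lborel {a<..<1::real}"
    by (rule measure_restrict_space) (use that in auto)
  also have "\<dots> = 1 - a" using that by (simp add: measure_def)
  finally show ?thesis .
qed

lemma RU1:
  assumes "0 \<le> \<alpha>" "\<alpha> < 1"
  shows "(\<integral>\<beta>. indicator {\<alpha><..<1} \<beta> * qf M X \<beta> \<partial>QQ) \<le> (1 - \<alpha>) * t + EP M X t"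
proof -
  have i1: "integrable QQ (\<lambda>\<beta>. indicator {\<alpha><..<1} \<beta> * qf M X \<beta>)"
    by (rule QQ_int[where B=C]) (auto split: split_indicator intro: qf_bnd Cnn)
  have i2: "integrable QQ (\<lambda>\<beta>. indicator {\<alpha><..<1} \<beta> * t)"
    by (rule QQ_int[where B="\<bar>t\<bar>"]) (auto split: split_indicator)
  have i3: "integrable QQ (\<lambda>\<beta>. max (qf M X \<beta> - t) 0)"
    by (rule QQ_int[where B="C + \<bar>t\<bar>"]) (use qf_bnd Cnn in \<open>fastforce\<close>)+
  have "(\<integral>\<beta>. indicator {\<alpha><..<1} \<beta> * qf M X \<beta> \<partial>QQ)
      \<le> (\<integral>\<beta>. indicator {\<alpha><..<1} \<beta> * t + max (qf M X \<beta> - t) 0 \<partial>QQ)"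
    by (rule integral_mono[OF i1 Bochner_Integration.integrable_add[OF i2 i3]])
       (auto split: split_indicator)
  also have "\<dots> = (1 - \<alpha>) * t + EP M X t"
    by (subst Bochner_Integration.integral_add[OF i2 i3]) (simp only: ind_int[OF assms] EP_q)
  finally show ?thesis .
qed

lemma RU2:
  assumes "0 \<le> \<alpha>" "\<alpha> < 1"
  shows "\<exists>t. (\<integral>\<beta>. indicator {\<alpha><..<1} \<beta> * qf M X \<beta> \<partial>QQ) = (1 - \<alpha>) * t + EP M X t"
proof -
  define t where "t = (if \<alpha> = 0 then - C else qf M X \<alpha>)"
  have i2: "integrable QQ (\<lambda>\<beta>. indicator {\<alpha><..<1} \<beta> * t)"
    by (rule QQ_int[where B="\<bar>t\<bar>"]) (auto split: split_indicator)
  have i3: "integrable QQ (\<lambda>\<beta>. max (qf M X \<beta> - t) 0)"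
    by (rule QQ_int[where B="C + \<bar>t\<bar>"]) (use qf_bnd Cnn in \<open>fastforce\<close>)+
  have pt: "indicator {\<alpha><..<1} \<beta> * qf M X \<beta> = indicator {\<alpha><..<1} \<beta> * t + max (qf M X \<beta> - t) 0"
    if "\<beta> \<in> space QQ" for \<beta>
  proof (cases "\<alpha> < \<beta>")
    case True
    have "t \<le> qf M X \<beta>"
    proof (cases "\<alpha> = 0")
      case True then show ?thesis using qf_bounds[of \<beta>] that by (auto simp: t_def space_restrict_space)
    next
      case False then show ?thesis using qf_mono[of \<alpha> \<beta>] that assms \<open>\<alpha> < \<beta>\<close>
        by (auto simp: t_def space_restrict_space)
    qed
    then show ?thesis using True that by (auto simp: space_restrict_space)
  next
    case False
    then have "0 < \<alpha>" using that by (auto simp: space_restrict_space)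
    then have "qf M X \<beta> \<le> t" using qf_mono[of \<beta> \<alpha>] that assms False
      by (auto simp: t_def space_restrict_space)
    then show ?thesis using False by auto
  qed
  have "(\<integral>\<beta>. indicator {\<alpha><..<1} \<beta> * qf M X \<beta> \<partial>QQ)
      = (\<integral>\<beta>. indicator {\<alpha><..<1} \<beta> * t + max (qf M X \<beta> - t) 0 \<partial>QQ)"
    by (rule Bochner_Integration.integral_cong[OF refl pt])
  also have "\<dots> = (1 - \<alpha>) * t + EP M X t"
    by (subst Bochner_Integration.integral_add[OF i2 i3]) (simp only: ind_int[OF assms] EP_q)
  finally show ?thesis by blast
qed

end

context bdd_rv
begin

lemma ES_rep:
  assumes "0 \<le> \<alpha>" "\<alpha> < 1"
  shows "ES M \<alpha> X = (\<integral>\<beta>. indicator {\<alpha><..<1} \<beta> * qf M X \<beta> \<partial>QQ) / (1 - \<alpha>)"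
proof -
  define c0 where "c0 = real_of_ereal (VaR M 0 X)"
  define h where "h \<beta> = (if \<beta> \<in> {0<..1} then qf M X \<beta> else c0)" for \<beta>
  have "qf M X \<in> borel_measurable (restrict_space borel {0<..1})"
    by (rule borel_measurable_mono_on_fnc) (auto simp: mono_on_def intro: qf_mono)
  then have hm[measurable]: "h \<in> borel_measurable borel"
    unfolding h_def[abs_def] using measurable_restrict_space_iff[of "{0<..1}" borel c0 borel "qf M X"]
    by simp
  have "\<forall>\<beta>. \<beta> \<in> {\<alpha>..1} \<longrightarrow> real_of_ereal (VaR M \<beta> X) = h \<beta>"
  proof (intro allI impI)
    fix \<beta> :: real assume b: "\<beta> \<in> {\<alpha>..1}"
    show "real_of_ereal (VaR M \<beta> X) = h \<beta>"
    proof (cases "\<beta> = 0")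
      case True then show ?thesis by (simp add: h_def c0_def)
    next
      case False then have "0 < \<beta>" using b assms by auto
      then show ?thesis using b VaR_eq[of \<beta>] by (simp add: h_def)
    qed
  qed
  then have 1: "(LBINT \<beta>:{\<alpha>..1}. real_of_ereal (VaR M \<beta> X)) = (LBINT \<beta>:{\<alpha>..1}. h \<beta>)"
    by (intro set_lebesgue_integral_cong) auto
  have 2: "(LBINT \<beta>:{\<alpha>..1}. h \<beta>) = (\<integral>\<beta>. indicator {\<alpha><..<1} \<beta> * h \<beta> \<partial>lborel)"
    unfolding set_lebesgue_integral_def
  proof (rule integral_cong_AE)
    show "AE \<beta> in lborel. indicator {\<alpha>..1} \<beta> *\<^sub>R h \<beta> = indicator {\<alpha><..<1} \<beta> * h \<beta>"
      using AE_lborel_singleton[of \<alpha>] AE_lborel_singleton[of 1]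
      by eventually_elim (auto split: split_indicator)
  qed measurable
  have 3: "(\<integral>\<beta>. indicator {\<alpha><..<1} \<beta> * h \<beta> \<partial>lborel) = (\<integral>\<beta>. indicator {\<alpha><..<1} \<beta> * qf M X \<beta> \<partial>QQ)"
    by (subst integral_restrict_space)
       (use assms in \<open>auto intro!: Bochner_Integration.integral_cong simp: h_def split: split_indicator\<close>)
  show ?thesis using assms unfolding ES_def 1 2 3 by simp
qed

lemma ES_RU1:
  assumes "0 \<le> \<alpha>" "\<alpha> < 1"
  shows "ES M \<alpha> X \<le> t + EP M X t / (1 - \<alpha>)"
proof -
  have "ES M \<alpha> X * (1 - \<alpha>) \<le> (1 - \<alpha>) * t + EP M X t"
    using RU1[OF assms, of t] ES_rep[OF assms] assms by simp
  then show ?thesis using assms by (simp add: field_simps)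
qed

lemma ES_RU2:
  assumes "0 \<le> \<alpha>" "\<alpha> < 1"
  shows "\<exists>t. ES M \<alpha> X = t + EP M X t / (1 - \<alpha>)"
proof -
  obtain t where "(\<integral>\<beta>. indicator {\<alpha><..<1} \<beta> * qf M X \<beta> \<partial>QQ) = (1 - \<alpha>) * t + EP M X t"
    using RU2[OF assms] by blast
  then have "ES M \<alpha> X * (1 - \<alpha>) = (1 - \<alpha>) * t + EP M X t"
    using ES_rep[OF assms] assms by simp
  then have "ES M \<alpha> X = t + EP M X t / (1 - \<alpha>)" using assms by (simp add: field_simps)
  then show ?thesis by blast
qed

lemma ES_one: "ES M 1 X = qf M X 1"
  unfolding ES_def using VaR_eq[of 1] by simp

lemma AE_le_iff: "(AE \<omega> in M. X \<omega> \<le> c) \<longleftrightarrow> F c = 1"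
proof -
  have "(AE \<omega> in M. X \<omega> \<le> c) \<longleftrightarrow> (AE \<omega> in M. \<omega> \<in> {\<omega> \<in> space M. X \<omega> \<le> c})"
    by (rule AE_cong) auto
  also have "\<dots> \<longleftrightarrow> F c = 1" unfolding cdf_of_def by (subst prob_eq_1) auto
  finally show ?thesis .
qed

lemma ES1_le: "ES M 1 X \<le> c \<longleftrightarrow> (AE \<omega> in M. X \<omega> \<le> c)"
  unfolding ES_one AE_le_iff using qf_Galois[of 1 c] F_le1[of c] by auto

lemma EP_int: "integrable M (\<lambda>\<omega>. max (X \<omega> - t) 0)"
proof (rule integrable_const_bound[where B="C + \<bar>t\<bar>"])
  show "AE \<omega> in M. norm (max (X \<omega> - t) 0) \<le> C + \<bar>t\<bar>"
    using bnd by eventually_elim (use Cnn in auto)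
qed measurable

lemma EP_nonneg: "0 \<le> EP M X t"
  unfolding EP_def by (rule Bochner_Integration.integral_nonneg) auto

lemma EP_zero: "EP M X t = 0 \<longleftrightarrow> (AE \<omega> in M. X \<omega> \<le> t)"
proof -
  have "EP M X t = 0 \<longleftrightarrow> (AE \<omega> in M. max (X \<omega> - t) 0 = 0)"
    unfolding EP_def by (rule integral_nonneg_eq_0_iff_AE[OF EP_int]) auto
  also have "\<dots> \<longleftrightarrow> (AE \<omega> in M. X \<omega> \<le> t)"
    by (rule AE_cong) auto
  finally show ?thesis .
qed

lemma EP_tail:
  assumes "t \<le> x"
  shows "(x - t) * (1 - F x) \<le> EP M X t"
proof -
  let ?A = "{\<omega> \<in> space M. x < X \<omega>}"
  have A: "?A = space M - {\<omega> \<in> space M. X \<omega> \<le> x}" by auto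
  have "prob ?A = 1 - F x" unfolding A cdf_of_def by (rule prob_compl) measurable
  then have "(x - t) * (1 - F x) = (\<integral>\<omega>. (x - t) * indicator ?A \<omega> \<partial>M)"
    by (simp add: Int_absorb2)
  also have "\<dots> \<le> EP M X t"
    unfolding EP_def
  proof (rule integral_mono[OF _ EP_int])
    show "integrable M (\<lambda>\<omega>. (x - t) * indicator ?A \<omega>)"
      by (intro integrable_mult_right integrable_real_indicator) (auto simp: emeasure_eq_measure)
  qed (use assms in \<open>auto split: split_indicator\<close>)
  finally show ?thesis .
qed

lemma EP_lower: "max (- C - t) 0 \<le> EP M X t"
proof -
  have "(\<integral>\<omega>. max (- C - t) 0 \<partial>M) \<le> EP M X t"
    unfolding EP_def
    by (rule integral_mono_AE[OF _ EP_int]) (use bnd in \<open>auto elim!: eventually_mono\<close>)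
  then show ?thesis by (simp add: prob_space)
qed

end

context bdd_rv
begin

lemma F_meas[measurable]: "F \<in> borel_measurable borel"
  by (rule borel_measurable_mono) (auto simp: mono_def intro: F_mono)

interpretation P: pair_sigma_finite M lborel
  unfolding pair_sigma_finite_def using sigma_finite_measure_axioms lborel.sigma_finite_measure_axioms
  by simp

lemma EP_layer: "ennreal (EP M X t) = (\<integral>\<^sup>+ x. indicator {t<..} x * ennreal (1 - F x) \<partial>lborel)"
proof -
  define f where "f \<omega> x = (if t < x \<and> x < X \<omega> then 1 else 0 :: ennreal)" for \<omega> x
  have fm: "case_prod f \<in> borel_measurable (M \<Otimes>\<^sub>M lborel)"
    unfolding f_def[abs_def] by measurable
  have "ennreal (EP M X t) = (\<integral>\<^sup>+ \<omega>. ennreal (max (X \<omega> - t) 0) \<partial>M)"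
    unfolding EP_def by (rule nn_integral_eq_integral[OF EP_int, symmetric]) auto
  also have "\<dots> = (\<integral>\<^sup>+ \<omega>. (\<integral>\<^sup>+ x. f \<omega> x \<partial>lborel) \<partial>M)"
  proof (rule nn_integral_cong)
    fix \<omega>
    have "(\<integral>\<^sup>+ x. f \<omega> x \<partial>lborel) = (\<integral>\<^sup>+ x. indicator {t<..<X \<omega>} x \<partial>lborel)"
      by (rule nn_integral_cong) (auto simp: f_def split: split_indicator)
    also have "\<dots> = emeasure lborel {t<..<X \<omega>}" by simp
    also have "\<dots> = ennreal (max (X \<omega> - t) 0)"
      by (cases "t < X \<omega>") auto
    finally show "ennreal (max (X \<omega> - t) 0) = (\<integral>\<^sup>+ x. f \<omega> x \<partial>lborel)" ..
  qed
  also have "\<dots> = (\<integral>\<^sup>+ x. (\<integral>\<^sup>+ \<omega>. f \<omega> x \<partial>M) \<partial>lborel)"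
    by (rule P.Fubini'[OF fm, symmetric])
  also have "\<dots> = (\<integral>\<^sup>+ x. indicator {t<..} x * ennreal (1 - F x) \<partial>lborel)"
  proof (rule nn_integral_cong)
    fix x :: real
    let ?A = "{\<omega> \<in> space M. x < X \<omega>}"
    have A: "?A = space M - {\<omega> \<in> space M. X \<omega> \<le> x}" by auto
    have pA: "prob ?A = 1 - F x" unfolding A cdf_of_def by (rule prob_compl) measurable
    have "(\<integral>\<^sup>+ \<omega>. f \<omega> x \<partial>M) = (\<integral>\<^sup>+ \<omega>. indicator {t<..} x * indicator ?A \<omega> \<partial>M)"
      by (rule nn_integral_cong) (auto simp: f_def split: split_indicator)
    also have "\<dots> = indicator {t<..} x * emeasure M ?A"
      by (rule nn_integral_cmult_indicator) measurable
    also have "\<dots> = indicator {t<..} x * ennreal (1 - F x)"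
      using pA by (simp add: emeasure_eq_measure)
    finally show "(\<integral>\<^sup>+ \<omega>. f \<omega> x \<partial>M) = indicator {t<..} x * ennreal (1 - F x)" .
  qed
  finally show ?thesis .
qed

end

lemma ennreal_comb:
  fixes \<gamma> a b :: real
  assumes "0 \<le> \<gamma>" "\<gamma> \<le> 1" "0 \<le> a" "0 \<le> b"
  shows "ennreal (\<gamma> * a + (1 - \<gamma>) * b) = ennreal \<gamma> * ennreal a + ennreal (1 - \<gamma>) * ennreal b"
proof -
  have "ennreal (\<gamma> * a + (1 - \<gamma>) * b) = ennreal (\<gamma> * a) + ennreal ((1 - \<gamma>) * b)"
    by (rule ennreal_plus) (use assms in auto)
  also have "ennreal (\<gamma> * a) = ennreal \<gamma> * ennreal a" by (rule ennreal_mult) (use assms in auto)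
  also have "ennreal ((1 - \<gamma>) * b) = ennreal (1 - \<gamma>) * ennreal b" by (rule ennreal_mult) (use assms in auto)
  finally show ?thesis .
qed

lemma EP_mix:
  assumes X: "bdd_rv M X C1" and Y: "bdd_rv M Y C2" and Z: "bdd_rv M Z C3"
    and g: "0 \<le> \<gamma>" "\<gamma> \<le> 1"
    and cdf: "\<And>x. cdf_of M Z x = \<gamma> * cdf_of M X x + (1 - \<gamma>) * cdf_of M Y x"
  shows "EP M Z t = \<gamma> * EP M X t + (1 - \<gamma>) * EP M Y t"
proof -
  have FXm[measurable]: "cdf_of M X \<in> borel_measurable borel" using bdd_rv.F_meas[OF X] .
  have FYm[measurable]: "cdf_of M Y \<in> borel_measurable borel" using bdd_rv.F_meas[OF Y] .
  have FX1: "cdf_of M X x \<le> 1" for x using bdd_rv.F_le1[OF X] .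
  have FY1: "cdf_of M Y x \<le> 1" for x using bdd_rv.F_le1[OF Y] .
  have "ennreal (EP M Z t) = (\<integral>\<^sup>+ x. indicator {t<..} x * ennreal (1 - cdf_of M Z x) \<partial>lborel)"
    by (rule bdd_rv.EP_layer[OF Z])
  also have "\<dots> = (\<integral>\<^sup>+ x. ennreal \<gamma> * (indicator {t<..} x * ennreal (1 - cdf_of M X x))
       + ennreal (1 - \<gamma>) * (indicator {t<..} x * ennreal (1 - cdf_of M Y x)) \<partial>lborel)"
  proof (rule nn_integral_cong)
    fix x :: real
    have "1 - cdf_of M Z x = \<gamma> * (1 - cdf_of M X x) + (1 - \<gamma>) * (1 - cdf_of M Y x)"
      unfolding cdf by (simp add: algebra_simps)
    then have "ennreal (1 - cdf_of M Z x) = ennreal \<gamma> * ennreal (1 - cdf_of M X x) + ennreal (1 - \<gamma>) * ennreal (1 - cdf_of M Y x)"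
      using ennreal_comb[OF g, of "1 - cdf_of M X x" "1 - cdf_of M Y x"] g FX1[of x] FY1[of x] by simp
    then show "indicator {t<..} x * ennreal (1 - cdf_of M Z x) = ennreal \<gamma> * (indicator {t<..} x * ennreal (1 - cdf_of M X x))
       + ennreal (1 - \<gamma>) * (indicator {t<..} x * ennreal (1 - cdf_of M Y x))"
      by (simp add: algebra_simps)
  qed
  also have "\<dots> = ennreal \<gamma> * (\<integral>\<^sup>+ x. indicator {t<..} x * ennreal (1 - cdf_of M X x) \<partial>lborel)
       + ennreal (1 - \<gamma>) * (\<integral>\<^sup>+ x. indicator {t<..} x * ennreal (1 - cdf_of M Y x) \<partial>lborel)"
    by (subst nn_integral_add) (auto simp: nn_integral_cmult)
  also have "\<dots> = ennreal \<gamma> * ennreal (EP M X t) + ennreal (1 - \<gamma>) * ennreal (EP M Y t)"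
    by (simp only: bdd_rv.EP_layer[OF X] bdd_rv.EP_layer[OF Y])
  also have "\<dots> = ennreal (\<gamma> * EP M X t + (1 - \<gamma>) * EP M Y t)"
    using ennreal_comb[OF g bdd_rv.EP_nonneg[OF X, of t] bdd_rv.EP_nonneg[OF Y, of t]] by simp
  finally have "ennreal (EP M Z t) = ennreal (\<gamma> * EP M X t + (1 - \<gamma>) * EP M Y t)" .
  then show ?thesis
    using g bdd_rv.EP_nonneg[OF X, of t] bdd_rv.EP_nonneg[OF Y, of t] bdd_rv.EP_nonneg[OF Z, of t]
    by (subst (asm) ennreal_inj) auto
qed

lemma Linf_bdd: "prob_space M \<Longrightarrow> X \<in> Linf M \<Longrightarrow> \<exists>C. bdd_rv M X C"
  unfolding Linf_def bdd_rv_def bdd_rv_axioms_def by auto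

lemma conv_le_max: "0 \<le> (g::real) \<Longrightarrow> g \<le> 1 \<Longrightarrow> g * a + (1 - g) * b \<le> max a b"
proof -
  assume g: "0 \<le> g" "g \<le> 1"
  have "g * a \<le> g * max a b" "(1 - g) * b \<le> (1 - g) * max a b"
    using g by (auto intro!: mult_left_mono)
  then show ?thesis by (simp add: algebra_simps)
qed

lemma min_le_conv: "0 \<le> (g::real) \<Longrightarrow> g \<le> 1 \<Longrightarrow> min a b \<le> g * a + (1 - g) * b"
proof -
  assume g: "0 \<le> g" "g \<le> 1"
  have "g * min a b \<le> g * a" "(1 - g) * min a b \<le> (1 - g) * b"
    using g by (auto intro!: mult_left_mono)
  then show ?thesis by (simp add: algebra_simps)
qed

lemma comb_div: "(k::real) \<noteq> 0 \<Longrightarrow> (g * p + (1 - g) * q) + (g * a + (1 - g) * b) / k = g * (p + a / k) + (1 - g) * (q + b / k)"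
  by (simp add: field_simps)

lemma comb_div2: "(k::real) \<noteq> 0 \<Longrightarrow> g * (p + a / k) + (1 - g) * (p + b / k) = p + (g * a + (1 - g) * b) / k"
  by (simp add: field_simps)

context bdd_rv
begin

lemma AE_le_C: "AE \<omega> in M. X \<omega> \<le> C"
  using bnd by eventually_elim auto

lemma ES1_self: "AE \<omega> in M. X \<omega> \<le> ES M 1 X"
  using ES1_le[of "ES M 1 X"] by simp

lemma EP_ES1: "EP M X (ES M 1 X) = 0"
  using EP_zero ES1_self by simp

lemma ES_bounds:
  assumes "0 \<le> \<alpha>" "\<alpha> \<le> 1"
  shows "- C \<le> ES M \<alpha> X \<and> ES M \<alpha> X \<le> C"
proof (cases "\<alpha> < 1")
  case True
  have "EP M X C = 0" using EP_zero AE_le_C by simp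
  then have up: "ES M \<alpha> X \<le> C" using ES_RU1[OF assms(1) True, of C] by simp
  obtain t where t: "ES M \<alpha> X = t + EP M X t / (1 - \<alpha>)" using ES_RU2[OF assms(1) True] by blast
  have lo: "- C \<le> ES M \<alpha> X"
  proof (cases "- C \<le> t")
    case True
    have "0 \<le> EP M X t / (1 - \<alpha>)" using EP_nonneg \<open>\<alpha> < 1\<close> by simp
    then show ?thesis using t True by simp
  next
    case False
    have e: "- C - t \<le> EP M X t" using EP_lower[of t] by simp
    have "EP M X t \<le> EP M X t / (1 - \<alpha>)"
      using EP_nonneg[of t] assms \<open>\<alpha> < 1\<close> by (simp add: le_divide_eq mult_left_le)
    then show ?thesis using t e by simp
  qed
  show ?thesis using up lo by simp
next
  case False
  then have a: "\<alpha> = 1" using assms by simp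
  have up: "ES M 1 X \<le> C" using ES1_le AE_le_C by simp
  have lo: "- C \<le> ES M 1 X"
  proof (rule ccontr)
    assume "\<not> - C \<le> ES M 1 X"
    moreover have "max (- C - ES M 1 X) 0 \<le> 0" using EP_lower[of "ES M 1 X"] EP_ES1 by simp
    ultimately show False by simp
  qed
  show ?thesis using up lo a by simp
qed

lemma ES_mono_alpha:
  assumes "0 \<le> \<alpha>" "\<alpha> \<le> \<alpha>'" "\<alpha>' \<le> 1"
  shows "ES M \<alpha> X \<le> ES M \<alpha>' X"
proof (cases "\<alpha>' < 1")
  case True
  obtain t where t: "ES M \<alpha>' X = t + EP M X t / (1 - \<alpha>')" using ES_RU2[of \<alpha>'] True assms by auto
  have "ES M \<alpha> X \<le> t + EP M X t / (1 - \<alpha>)" using ES_RU1[of \<alpha> t] True assms by auto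
  also have "EP M X t / (1 - \<alpha>) \<le> EP M X t / (1 - \<alpha>')"
    using EP_nonneg[of t] True assms by (intro divide_left_mono) auto
  finally show ?thesis using t by simp
next
  case False
  then have a': "\<alpha>' = 1" using assms by simp
  show ?thesis
  proof (cases "\<alpha> < 1")
    case True
    then show ?thesis using ES_RU1[of \<alpha> "ES M 1 X"] assms EP_ES1 a' by simp
  next
    case False
    then have "\<alpha> = 1" using a' assms by simp
    then show ?thesis using a' by simp
  qed
qed

end

lemma ES_EPdom:
  assumes X: "bdd_rv M X Cx" and Y: "bdd_rv M Y Cy"
    and dom: "\<And>t. EP M Y t \<le> EP M X t" and a: "0 \<le> \<alpha>" "\<alpha> \<le> 1"
  shows "ES M \<alpha> Y \<le> ES M \<alpha> X"
proof (cases "\<alpha> < 1")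
  case True
  obtain t where t: "ES M \<alpha> X = t + EP M X t / (1 - \<alpha>)" using bdd_rv.ES_RU2[OF X a(1) True] by blast
  have "ES M \<alpha> Y \<le> t + EP M Y t / (1 - \<alpha>)" using bdd_rv.ES_RU1[OF Y a(1) True] .
  also have "EP M Y t / (1 - \<alpha>) \<le> EP M X t / (1 - \<alpha>)"
    using dom[of t] True by (intro divide_right_mono) auto
  finally show ?thesis using t by simp
next
  case False
  then have a1: "\<alpha> = 1" using a by simp
  let ?c = "ES M 1 X"
  have "EP M Y ?c \<le> 0" using dom[of ?c] bdd_rv.EP_ES1[OF X] by simp
  then have "EP M Y ?c = 0" using bdd_rv.EP_nonneg[OF Y, of ?c] by simp
  then have "AE \<omega> in M. Y \<omega> \<le> ?c" using bdd_rv.EP_zero[OF Y] by simp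
  then show ?thesis using bdd_rv.ES1_le[OF Y] a1 by simp
qed

lemma ES_conv:
  assumes X: "bdd_rv M X Cx" and Y: "bdd_rv M Y Cy" and Z: "bdd_rv M Z Cz"
    and g: "0 \<le> \<gamma>" "\<gamma> \<le> 1"
    and cv: "\<And>s u. EP M Z (\<gamma> * s + (1 - \<gamma>) * u) \<le> \<gamma> * EP M X s + (1 - \<gamma>) * EP M Y u"
    and a: "0 \<le> \<alpha>" "\<alpha> \<le> 1"
  shows "ES M \<alpha> Z \<le> max (ES M \<alpha> X) (ES M \<alpha> Y)"
proof (cases "\<alpha> < 1")
  case True
  obtain s where s: "ES M \<alpha> X = s + EP M X s / (1 - \<alpha>)" using bdd_rv.ES_RU2[OF X a(1) True] by blast
  obtain u where u: "ES M \<alpha> Y = u + EP M Y u / (1 - \<alpha>)" using bdd_rv.ES_RU2[OF Y a(1) True] by blast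
  let ?t = "\<gamma> * s + (1 - \<gamma>) * u"
  have "ES M \<alpha> Z \<le> ?t + EP M Z ?t / (1 - \<alpha>)" using bdd_rv.ES_RU1[OF Z a(1) True] .
  also have "EP M Z ?t / (1 - \<alpha>) \<le> (\<gamma> * EP M X s + (1 - \<gamma>) * EP M Y u) / (1 - \<alpha>)"
    using cv[of s u] True by (intro divide_right_mono) auto
  also have "?t + (\<gamma> * EP M X s + (1 - \<gamma>) * EP M Y u) / (1 - \<alpha>)
      = \<gamma> * (s + EP M X s / (1 - \<alpha>)) + (1 - \<gamma>) * (u + EP M Y u / (1 - \<alpha>))"
    using True by (intro comb_div) simp
  also have "\<dots> \<le> max (ES M \<alpha> X) (ES M \<alpha> Y)" unfolding s[symmetric] u[symmetric]
    by (rule conv_le_max[OF g])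
  finally show ?thesis by simp
next
  case False
  then have a1: "\<alpha> = 1" using a by simp
  let ?s = "ES M 1 X" and ?u = "ES M 1 Y"
  let ?t = "\<gamma> * ?s + (1 - \<gamma>) * ?u"
  have "EP M Z ?t \<le> 0" using cv[of ?s ?u] bdd_rv.EP_ES1[OF X] bdd_rv.EP_ES1[OF Y] by simp
  then have "EP M Z ?t = 0" using bdd_rv.EP_nonneg[OF Z, of ?t] by simp
  then have "AE \<omega> in M. Z \<omega> \<le> ?t" using bdd_rv.EP_zero[OF Z] by simp
  then have "ES M 1 Z \<le> ?t" using bdd_rv.ES1_le[OF Z] by simp
  also have "\<dots> \<le> max ?s ?u" by (rule conv_le_max[OF g])
  finally show ?thesis using a1 by simp
qed

lemma ES_mixc:
  assumes X: "bdd_rv M X Cx" and Y: "bdd_rv M Y Cy" and Z: "bdd_rv M Z Cz"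
    and g: "0 \<le> \<gamma>" "\<gamma> \<le> 1"
    and mx: "\<And>t. EP M Z t = \<gamma> * EP M X t + (1 - \<gamma>) * EP M Y t"
    and a: "0 \<le> \<alpha>" "\<alpha> \<le> 1"
  shows "min (ES M \<alpha> X) (ES M \<alpha> Y) \<le> ES M \<alpha> Z"
proof (cases "\<alpha> < 1")
  case True
  obtain t where t: "ES M \<alpha> Z = t + EP M Z t / (1 - \<alpha>)" using bdd_rv.ES_RU2[OF Z a(1) True] by blast
  have "min (ES M \<alpha> X) (ES M \<alpha> Y) \<le> \<gamma> * ES M \<alpha> X + (1 - \<gamma>) * ES M \<alpha> Y"
    by (rule min_le_conv[OF g])
  also have "\<dots> \<le> \<gamma> * (t + EP M X t / (1 - \<alpha>)) + (1 - \<gamma>) * (t + EP M Y t / (1 - \<alpha>))"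
    using bdd_rv.ES_RU1[OF X a(1) True, of t] bdd_rv.ES_RU1[OF Y a(1) True, of t] g
    by (intro add_mono mult_left_mono) auto
  also have "\<dots> = t + EP M Z t / (1 - \<alpha>)"
    unfolding mx using True by (intro comb_div2) simp
  finally show ?thesis using t by simp
next
  case False
  then have a1: "\<alpha> = 1" using a by simp
  let ?c = "ES M 1 Z"
  have e: "\<gamma> * EP M X ?c + (1 - \<gamma>) * EP M Y ?c = 0" using mx[of ?c] bdd_rv.EP_ES1[OF Z] by simp
  have nx: "0 \<le> \<gamma> * EP M X ?c" using g bdd_rv.EP_nonneg[OF X, of ?c] by simp
  have ny: "0 \<le> (1 - \<gamma>) * EP M Y ?c" using g bdd_rv.EP_nonneg[OF Y, of ?c] by simp
  show ?thesis
  proof (cases "\<gamma> = 0")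
    case True
    then have "EP M Y ?c = 0" using e by simp
    then have "ES M 1 Y \<le> ?c" using bdd_rv.EP_zero[OF Y] bdd_rv.ES1_le[OF Y] by simp
    then show ?thesis using a1 by simp
  next
    case False
    have "\<gamma> * EP M X ?c = 0" using e nx ny by linarith
    then have "EP M X ?c = 0" using False by simp
    then have "ES M 1 X \<le> ?c" using bdd_rv.EP_zero[OF X] bdd_rv.ES1_le[OF X] by simp
    then show ?thesis using a1 by simp
  qed
qed

lemma maxc:
  fixes g x y s u :: real
  assumes "0 \<le> g" "g \<le> 1"
  shows "max (g * x + (1 - g) * y - (g * s + (1 - g) * u)) 0 \<le> g * max (x - s) 0 + (1 - g) * max (y - u) 0"
proof -
  have e: "g * x + (1 - g) * y - (g * s + (1 - g) * u) = g * (x - s) + (1 - g) * (y - u)"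
    by (simp add: algebra_simps)
  have 1: "g * (x - s) \<le> g * max (x - s) 0" using assms by (intro mult_left_mono) auto
  have 2: "(1 - g) * (y - u) \<le> (1 - g) * max (y - u) 0" using assms by (intro mult_left_mono) auto
  have 3: "0 \<le> g * max (x - s) 0" using assms by simp
  have 4: "0 \<le> (1 - g) * max (y - u) 0" using assms by simp
  show ?thesis unfolding e using 1 2 3 4 by linarith
qed

lemma bdd_rv_conv:
  assumes X: "bdd_rv M X Cx" and Y: "bdd_rv M Y Cy" and g: "0 \<le> \<gamma>" "\<gamma> \<le> 1"
  shows "bdd_rv M (\<lambda>\<omega>. \<gamma> * X \<omega> + (1 - \<gamma>) * Y \<omega>) (Cx + Cy)"
proof -
  interpret X: bdd_rv M X Cx by fact
  interpret Y: bdd_rv M Y Cy by fact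
  show ?thesis
  proof (unfold_locales)
    show "(\<lambda>\<omega>. \<gamma> * X \<omega> + (1 - \<gamma>) * Y \<omega>) \<in> borel_measurable M" by measurable
    show "AE \<omega> in M. \<bar>\<gamma> * X \<omega> + (1 - \<gamma>) * Y \<omega>\<bar> \<le> Cx + Cy"
      using X.bnd Y.bnd
    proof eventually_elim
      case (elim \<omega>)
      have "\<bar>\<gamma> * X \<omega> + (1 - \<gamma>) * Y \<omega>\<bar> \<le> \<bar>\<gamma> * X \<omega>\<bar> + \<bar>(1 - \<gamma>) * Y \<omega>\<bar>" by (rule abs_triangle_ineq)
      also have "\<dots> = \<gamma> * \<bar>X \<omega>\<bar> + (1 - \<gamma>) * \<bar>Y \<omega>\<bar>" using g by (simp add: abs_mult)
      also have "\<dots> \<le> \<gamma> * Cx + (1 - \<gamma>) * Cy" using g elim by (intro add_mono mult_left_mono) auto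
      also have "\<dots> \<le> Cx + Cy" using g X.Cnn Y.Cnn
        by (smt (verit, best) mult_left_le_one_le)
      finally show ?case .
    qed
  qed
qed

lemma bdd_rv_shift:
  assumes X: "bdd_rv M X C"
  shows "bdd_rv M (\<lambda>\<omega>. X \<omega> + m) (C + \<bar>m\<bar>)"
proof -
  interpret X: bdd_rv M X C by fact
  show ?thesis
  proof (unfold_locales)
    show "(\<lambda>\<omega>. X \<omega> + m) \<in> borel_measurable M" by measurable
    show "AE \<omega> in M. \<bar>X \<omega> + m\<bar> \<le> C + \<bar>m\<bar>"
      using X.bnd by eventually_elim auto
  qed
qed

lemma bdd_rv_const:
  assumes "prob_space M"
  shows "bdd_rv M (\<lambda>\<omega>. t) \<bar>t\<bar>"
proof -
  interpret prob_space M by fact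
  show ?thesis by unfold_locales auto
qed

lemma EP_conv:
  assumes X: "bdd_rv M X Cx" and Y: "bdd_rv M Y Cy" and g: "0 \<le> \<gamma>" "\<gamma> \<le> 1"
  shows "EP M (\<lambda>\<omega>. \<gamma> * X \<omega> + (1 - \<gamma>) * Y \<omega>) (\<gamma> * s + (1 - \<gamma>) * u) \<le> \<gamma> * EP M X s + (1 - \<gamma>) * EP M Y u"
proof -
  have Z: "bdd_rv M (\<lambda>\<omega>. \<gamma> * X \<omega> + (1 - \<gamma>) * Y \<omega>) (Cx + Cy)" by (rule bdd_rv_conv[OF X Y g])
  have iX: "integrable M (\<lambda>\<omega>. max (X \<omega> - s) 0)" by (rule bdd_rv.EP_int[OF X])
  have iY: "integrable M (\<lambda>\<omega>. max (Y \<omega> - u) 0)" by (rule bdd_rv.EP_int[OF Y])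
  have "EP M (\<lambda>\<omega>. \<gamma> * X \<omega> + (1 - \<gamma>) * Y \<omega>) (\<gamma> * s + (1 - \<gamma>) * u)
      \<le> (\<integral>\<omega>. \<gamma> * max (X \<omega> - s) 0 + (1 - \<gamma>) * max (Y \<omega> - u) 0 \<partial>M)"
    unfolding EP_def
    by (rule integral_mono[OF bdd_rv.EP_int[OF Z]]) (use iX iY maxc[OF g] in auto)
  also have "\<dots> = \<gamma> * EP M X s + (1 - \<gamma>) * EP M Y u"
    unfolding EP_def using iX iY by simp
  finally show ?thesis .
qed

lemma EP_shift: "EP M (\<lambda>\<omega>. X \<omega> + m) t = EP M X (t - m)"
  unfolding EP_def by (simp add: algebra_simps)

lemma EP_const: "prob_space M \<Longrightarrow> EP M (\<lambda>\<omega>. c) t = max (c - t) 0"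
  unfolding EP_def by (simp add: prob_space.prob_space)

lemma EP_AEdom:
  assumes X: "bdd_rv M X Cx" and Y: "bdd_rv M Y Cy" and ae: "AE \<omega> in M. Y \<omega> \<le> X \<omega>"
  shows "EP M Y t \<le> EP M X t"
  unfolding EP_def
  by (rule integral_mono_AE[OF bdd_rv.EP_int[OF Y] bdd_rv.EP_int[OF X]]) (use ae in \<open>auto elim!: eventually_mono\<close>)

lemma mono_maxt: "mono (\<lambda>x::real. max (x - t) 0)"
  by (auto intro!: monoI)

lemma convex_maxt: "convex_on UNIV (\<lambda>x::real. max (x - t) 0)"
proof (rule convex_onI)
  fix a x y :: real assume a: "0 < a" "a < 1"
  have "max ((1 - a) * x + a * y - ((1 - a) * t + a * t)) 0 \<le> (1 - a) * max (x - t) 0 + (1 - (1 - a)) * max (y - t) 0"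
    using maxc[of "1 - a" x y t t] a by simp
  then show "max ((1 - a) *\<^sub>R x + a *\<^sub>R y - t) 0 \<le> (1 - a) * max (x - t) 0 + a * max (y - t) 0"
    by (simp add: algebra_simps)
qed simp

lemma EP_icx:
  assumes "icx_ge M X Y"
  shows "EP M Y t \<le> EP M X t"
  using assms mono_maxt[of t] convex_maxt[of t] unfolding icx_ge_def EP_def by blast

lemma ES_shift:
  assumes X: "bdd_rv M X C" and a: "0 \<le> \<alpha>" "\<alpha> \<le> 1"
  shows "ES M \<alpha> (\<lambda>\<omega>. X \<omega> + m) \<le> ES M \<alpha> X + m"
proof -
  have Xm: "bdd_rv M (\<lambda>\<omega>. X \<omega> + m) (C + \<bar>m\<bar>)" by (rule bdd_rv_shift[OF X])
  show ?thesis
  proof (cases "\<alpha> < 1")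
    case True
    obtain t where t: "ES M \<alpha> X = t + EP M X t / (1 - \<alpha>)" using bdd_rv.ES_RU2[OF X a(1) True] by blast
    have "ES M \<alpha> (\<lambda>\<omega>. X \<omega> + m) \<le> (t + m) + EP M (\<lambda>\<omega>. X \<omega> + m) (t + m) / (1 - \<alpha>)"
      by (rule bdd_rv.ES_RU1[OF Xm a(1) True])
    then show ?thesis using t by (simp add: EP_shift)
  next
    case False
    then have a1: "\<alpha> = 1" using a by simp
    have "AE \<omega> in M. X \<omega> + m \<le> ES M 1 X + m" using bdd_rv.ES1_self[OF X] by eventually_elim simp
    then show ?thesis using bdd_rv.ES1_le[OF Xm] a1 by simp
  qed
qed

lemma ES_const:
  assumes P: "prob_space M" and a: "0 \<le> \<alpha>" "\<alpha> \<le> 1"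
  shows "ES M \<alpha> (\<lambda>\<omega>. t) = t"
proof -
  have T: "bdd_rv M (\<lambda>\<omega>. t) \<bar>t\<bar>" by (rule bdd_rv_const[OF P])
  show ?thesis
  proof (cases "\<alpha> < 1")
    case True
    have le: "ES M \<alpha> (\<lambda>\<omega>. t) \<le> t"
      using bdd_rv.ES_RU1[OF T a(1) True, of t] by (simp add: EP_const[OF P])
    obtain s where s: "ES M \<alpha> (\<lambda>\<omega>. t) = s + EP M (\<lambda>\<omega>. t) s / (1 - \<alpha>)"
      using bdd_rv.ES_RU2[OF T a(1) True] by blast
    have "max (t - s) 0 \<le> max (t - s) 0 / (1 - \<alpha>)"
      using a True by (simp add: le_divide_eq mult_left_le)
    then have "t \<le> ES M \<alpha> (\<lambda>\<omega>. t)" unfolding s EP_const[OF P] by linarith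
    then show ?thesis using le by simp
  next
    case False
    then have a1: "\<alpha> = 1" using a by simp
    have "ES M 1 (\<lambda>\<omega>. t) \<le> c \<longleftrightarrow> t \<le> c" for c
      using bdd_rv.ES1_le[OF T, of c] prob_space.AE_const[OF P] by simp
    from this[of t] this[of "ES M 1 (\<lambda>\<omega>. t)"] show ?thesis using a1 by simp
  qed
qed

lemma ES_ge_x:
  assumes X: "bdd_rv M X C" and a: "0 \<le> \<alpha>" "\<alpha> \<le> 1" and Fx: "cdf_of M X x < \<alpha>"
  shows "x \<le> ES M \<alpha> X"
proof (cases "\<alpha> < 1")
  case True
  obtain t where t: "ES M \<alpha> X = t + EP M X t / (1 - \<alpha>)" using bdd_rv.ES_RU2[OF X a(1) True] by blast
  show ?thesis
  proof (cases "x \<le> t")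
    case True
    have "0 \<le> EP M X t / (1 - \<alpha>)" using bdd_rv.EP_nonneg[OF X, of t] \<open>\<alpha> < 1\<close> by simp
    then show ?thesis using t True by linarith
  next
    case False
    have "(x - t) * (1 - \<alpha>) \<le> (x - t) * (1 - cdf_of M X x)"
      using False Fx by (intro mult_left_mono) auto
    also have "\<dots> \<le> EP M X t" using bdd_rv.EP_tail[OF X, of t x] False by simp
    finally have "x - t \<le> EP M X t / (1 - \<alpha>)" using True by (simp add: le_divide_eq)
    then show ?thesis using t by simp
  qed
next
  case False
  then have a1: "\<alpha> = 1" using a by simp
  show ?thesis
  proof (rule ccontr)
    assume "\<not> x \<le> ES M \<alpha> X"
    then have "AE \<omega> in M. X \<omega> \<le> x" using bdd_rv.ES1_le[OF X, of x] a1 by simp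
    then have "cdf_of M X x = 1" using bdd_rv.AE_le_iff[OF X] by simp
    then show False using Fx a1 by simp
  qed
qed

lemma ES_lip:
  assumes X: "bdd_rv M X Cx" and Y: "bdd_rv M Y Cy" and a: "0 \<le> \<alpha>" "\<alpha> < 1"
  shows "ES M \<alpha> X \<le> ES M \<alpha> Y + (\<integral>\<omega>. \<bar>X \<omega> - Y \<omega>\<bar> \<partial>M) / (1 - \<alpha>)"
proof -
  interpret X: bdd_rv M X Cx by fact
  interpret Y: bdd_rv M Y Cy by fact
  let ?D = "(\<integral>\<omega>. \<bar>X \<omega> - Y \<omega>\<bar> \<partial>M)"
  have iD: "integrable M (\<lambda>\<omega>. \<bar>X \<omega> - Y \<omega>\<bar>)"
  proof (rule X.integrable_const_bound[where B="Cx + Cy"])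
    show "AE \<omega> in M. norm \<bar>X \<omega> - Y \<omega>\<bar> \<le> Cx + Cy" using X.bnd Y.bnd by eventually_elim auto
  qed measurable
  have ep: "EP M X t \<le> EP M Y t + ?D" for t
  proof -
    have "EP M X t \<le> (\<integral>\<omega>. max (Y \<omega> - t) 0 + \<bar>X \<omega> - Y \<omega>\<bar> \<partial>M)"
      unfolding EP_def by (rule integral_mono[OF X.EP_int]) (use Y.EP_int iD in auto)
    also have "\<dots> = EP M Y t + ?D" unfolding EP_def using Y.EP_int iD by simp
    finally show ?thesis .
  qed
  obtain t where t: "ES M \<alpha> Y = t + EP M Y t / (1 - \<alpha>)" using Y.ES_RU2[OF a] by blast
  have "ES M \<alpha> X \<le> t + EP M X t / (1 - \<alpha>)" by (rule X.ES_RU1[OF a])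
  also have "\<dots> \<le> t + (EP M Y t + ?D) / (1 - \<alpha>)"
    using ep[of t] a by (simp add: divide_right_mono)
  also have "\<dots> = ES M \<alpha> Y + ?D / (1 - \<alpha>)" unfolding t by (simp add: add_divide_distrib)
  finally show ?thesis .
qed

lemma ESL_bdd:
  assumes X: "bdd_rv M X C" and L: "\<And>x. 0 \<le> \<Lambda> x \<and> \<Lambda> x \<le> 1"
  shows "bdd_above (range (\<lambda>x. min (ES M (\<Lambda> x) X) x))"
proof (rule bdd_aboveI2)
  fix x
  have "ES M (\<Lambda> x) X \<le> C" using bdd_rv.ES_bounds[OF X, of "\<Lambda> x"] L[of x] by simp
  then show "min (ES M (\<Lambda> x) X) x \<le> C" by simp
qed

lemma ESL_upper:
  assumes X: "bdd_rv M X C" and L: "\<And>x. 0 \<le> \<Lambda> x \<and> \<Lambda> x \<le> 1"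
  shows "min (ES M (\<Lambda> x) X) x \<le> ES_Lambda M \<Lambda> X"
  unfolding ES_Lambda_def by (rule cSUP_upper[OF _ ESL_bdd[OF X L]]) simp

lemma ESL_least:
  assumes "\<And>x. min (ES M (\<Lambda> x) X) x \<le> B"
  shows "ES_Lambda M \<Lambda> X \<le> B"
  unfolding ES_Lambda_def by (rule cSUP_least) (use assms in auto)

lemma ESL_lower_bound:
  assumes X: "bdd_rv M X C" and L: "\<And>x. 0 \<le> \<Lambda> x \<and> \<Lambda> x \<le> 1"
  shows "- C \<le> ES_Lambda M \<Lambda> X"
proof -
  have "- C \<le> ES M (\<Lambda> (-C)) X" using bdd_rv.ES_bounds[OF X, of "\<Lambda> (-C)"] L[of "-C"] by simp
  then have "min (ES M (\<Lambda> (-C)) X) (-C) = - C" by simp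
  then show ?thesis using ESL_upper[where \<Lambda>=\<Lambda> and x="-C", OF X L] by simp
qed

lemma ESL_mono_pt:
  assumes Y: "bdd_rv M Y Cy" and L: "\<And>x. 0 \<le> \<Lambda> x \<and> \<Lambda> x \<le> 1"
    and L': "\<And>x. 0 \<le> \<Lambda>' x \<and> \<Lambda>' x \<le> 1"
    and pt: "\<And>x. ES M (\<Lambda>' x) X \<le> ES M (\<Lambda> x) Y"
  shows "ES_Lambda M \<Lambda>' X \<le> ES_Lambda M \<Lambda> Y"
proof (rule ESL_least)
  fix x
  have "min (ES M (\<Lambda>' x) X) x \<le> min (ES M (\<Lambda> x) Y) x" using pt[of x] by simp
  also have "\<dots> \<le> ES_Lambda M \<Lambda> Y" by (rule ESL_upper[OF Y L])
  finally show "min (ES M (\<Lambda>' x) X) x \<le> ES_Lambda M \<Lambda> Y" .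
qed

lemma ESL_VaR:
  assumes X: "bdd_rv M X C" and L: "\<And>x. 0 \<le> \<Lambda> x \<and> \<Lambda> x \<le> 1"
  shows "VaR_Lambda M \<Lambda> X \<le> ereal (ES_Lambda M \<Lambda> X)"
proof (rule ccontr)
  assume "\<not> VaR_Lambda M \<Lambda> X \<le> ereal (ES_Lambda M \<Lambda> X)"
  then have "ereal (ES_Lambda M \<Lambda> X) < VaR_Lambda M \<Lambda> X" by simp
  then obtain z where z: "ereal (ES_Lambda M \<Lambda> X) < ereal z" "ereal z < VaR_Lambda M \<Lambda> X"
    using ereal_dense2 by blast
  have "z \<notin> {x. \<Lambda> x \<le> cdf_of M X x}"
  proof
    assume "z \<in> {x. \<Lambda> x \<le> cdf_of M X x}"
    then have "VaR_Lambda M \<Lambda> X \<le> ereal z" unfolding VaR_Lambda_def by (auto intro!: INF_lower)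
    then show False using z(2) by simp
  qed
  then have "cdf_of M X z < \<Lambda> z" by simp
  then have "z \<le> ES M (\<Lambda> z) X" using ES_ge_x[OF X] L[of z] by simp
  then have "min (ES M (\<Lambda> z) X) z = z" by simp
  then have "z \<le> ES_Lambda M \<Lambda> X" using ESL_upper[where \<Lambda>=\<Lambda> and x=z, OF X L] by simp
  then show False using z(1) by simp
qed

lemma ESL_close:
  assumes X: "bdd_rv M X C" and Y: "bdd_rv M Y Cy"
    and L: "\<And>x. 0 \<le> \<Lambda> x \<and> \<Lambda> x \<le> 1" and L1: "\<And>x. \<Lambda> x < 1" and am: "antimono \<Lambda>"
    and K: "(\<integral>\<omega>. \<bar>Y \<omega> - X \<omega>\<bar> \<partial>M) / (1 - \<Lambda> (- C - 1)) \<le> 1"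
  shows "\<bar>ES_Lambda M \<Lambda> Y - ES_Lambda M \<Lambda> X\<bar> \<le> (\<integral>\<omega>. \<bar>Y \<omega> - X \<omega>\<bar> \<partial>M) / (1 - \<Lambda> (- C - 1))"
proof -
  define x0 where "x0 = - C - 1"
  define d where "d = (\<integral>\<omega>. \<bar>Y \<omega> - X \<omega>\<bar> \<partial>M)"
  define k where "k = d / (1 - \<Lambda> x0)"
  have d': "(\<integral>\<omega>. \<bar>X \<omega> - Y \<omega>\<bar> \<partial>M) = d" unfolding d_def by (simp add: abs_minus_commute)
  have d0: "0 \<le> d" unfolding d_def by simp
  have L0: "0 < 1 - \<Lambda> x0" using L1[of x0] by simp
  have k0: "0 \<le> k" unfolding k_def using d0 L0 by simp
  have K': "k \<le> 1" using K unfolding k_def d_def x0_def .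
  have close: "\<bar>ES M (\<Lambda> x) Y - ES M (\<Lambda> x) X\<bar> \<le> k" if "x0 \<le> x" for x
  proof -
    have lx: "\<Lambda> x \<le> \<Lambda> x0" using am that by (auto dest: antimonoD)
    have a: "0 \<le> \<Lambda> x" "\<Lambda> x < 1" using L[of x] L1[of x] by auto
    have "d / (1 - \<Lambda> x) \<le> d / (1 - \<Lambda> x0)"
      using d0 L0 lx by (intro divide_left_mono) auto
    moreover have "ES M (\<Lambda> x) Y \<le> ES M (\<Lambda> x) X + d / (1 - \<Lambda> x)"
      using ES_lip[OF Y X a] unfolding d_def .
    moreover have "ES M (\<Lambda> x) X \<le> ES M (\<Lambda> x) Y + d / (1 - \<Lambda> x)"
      using ES_lip[OF X Y a] unfolding d' .
    ultimately show ?thesis unfolding k_def by linarith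
  qed
  have EX0: "x0 + 1 \<le> ES M (\<Lambda> x0) X"
    using bdd_rv.ES_bounds[OF X, of "\<Lambda> x0"] L[of x0] unfolding x0_def by simp
  have EY0: "x0 \<le> ES M (\<Lambda> x0) Y" using close[of x0] EX0 K' by simp
  have gX0: "x0 \<le> ES_Lambda M \<Lambda> X"
    using ESL_upper[where \<Lambda>=\<Lambda> and x=x0, OF X L] EX0 by simp
  have gY0: "x0 \<le> ES_Lambda M \<Lambda> Y"
    using ESL_upper[where \<Lambda>=\<Lambda> and x=x0, OF Y L] EY0 by simp
  have 1: "ES_Lambda M \<Lambda> Y \<le> ES_Lambda M \<Lambda> X + k"
  proof (rule ESL_least)
    fix x
    show "min (ES M (\<Lambda> x) Y) x \<le> ES_Lambda M \<Lambda> X + k"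
    proof (cases "x0 \<le> x")
      case True
      have "min (ES M (\<Lambda> x) Y) x \<le> min (ES M (\<Lambda> x) X) x + k" using close[OF True] by linarith
      then show ?thesis using ESL_upper[where \<Lambda>=\<Lambda> and x=x, OF X L] by linarith
    next
      case False
      then show ?thesis using gX0 k0 by linarith
    qed
  qed
  have 2: "ES_Lambda M \<Lambda> X \<le> ES_Lambda M \<Lambda> Y + k"
  proof (rule ESL_least)
    fix x
    show "min (ES M (\<Lambda> x) X) x \<le> ES_Lambda M \<Lambda> Y + k"
    proof (cases "x0 \<le> x")
      case True
      have "min (ES M (\<Lambda> x) X) x \<le> min (ES M (\<Lambda> x) Y) x + k" using close[OF True] by linarith
      then show ?thesis using ESL_upper[where \<Lambda>=\<Lambda> and x=x, OF Y L] by linarith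
    next
      case False
      then show ?thesis using gY0 k0 by linarith
    qed
  qed
  show ?thesis using 1 2 unfolding k_def d_def x0_def by linarith
qed

theorem proposition2:
  fixes M :: "'a measure" and \<Lambda> \<Lambda>' :: "real \<Rightarrow> real"
  assumes "prob_space M" and "atomless M"
    and "antimono \<Lambda>" and "\<And>x. 0 \<le> \<Lambda> x \<and> \<Lambda> x \<le> 1"
    and "antimono \<Lambda>'" and "\<And>x. 0 \<le> \<Lambda>' x \<and> \<Lambda>' x \<le> 1"
  shows
    \<comment> \<open>(a)\<close>
    "((\<forall>x. \<Lambda> x \<ge> \<Lambda>' x) \<longrightarrow>
        (\<forall>X\<in>Linf M. ES_Lambda M \<Lambda> X \<ge> ES_Lambda M \<Lambda>' X))
     \<comment> \<open>(b)\<close>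
     \<and> (\<forall>X\<in>Linf M. \<forall>Y\<in>Linf M. (AE \<omega> in M. X \<omega> \<ge> Y \<omega>) \<longrightarrow>
          ES_Lambda M \<Lambda> X \<ge> ES_Lambda M \<Lambda> Y)
     \<comment> \<open>(c)\<close>
     \<and> (\<forall>X\<in>Linf M. ereal (ES_Lambda M \<Lambda> X) \<ge> VaR_Lambda M \<Lambda> X)
     \<comment> \<open>(d)\<close>
     \<and> (\<forall>X\<in>Linf M. \<forall>Y\<in>Linf M. \<forall>\<gamma>::real. 0 \<le> \<gamma> \<and> \<gamma> \<le> 1 \<longrightarrow>
          ES_Lambda M \<Lambda> (\<lambda>\<omega>. \<gamma> * X \<omega> + (1 - \<gamma>) * Y \<omega>)
            \<le> max (ES_Lambda M \<Lambda> X) (ES_Lambda M \<Lambda> Y))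
     \<comment> \<open>(e)\<close>
     \<and> (\<forall>t::real. ES_Lambda M \<Lambda> (\<lambda>\<omega>. t) = t)
     \<comment> \<open>(f)\<close>
     \<and> (\<forall>X\<in>Linf M. \<forall>m::real. m \<ge> 0 \<longrightarrow>
          ES_Lambda M \<Lambda> (\<lambda>\<omega>. X \<omega> + m) \<le> ES_Lambda M \<Lambda> X + m)
     \<comment> \<open>(g)\<close>
     \<and> (\<forall>X\<in>Linf M. \<forall>Y\<in>Linf M. icx_ge M X Y \<longrightarrow>
          ES_Lambda M \<Lambda> X \<ge> ES_Lambda M \<Lambda> Y)
     \<comment> \<open>(h)\<close>
     \<and> (\<forall>X\<in>Linf M. \<forall>Y\<in>Linf M. \<forall>Z\<in>Linf M. \<forall>\<gamma>::real. 0 \<le> \<gamma> \<and> \<gamma> \<le> 1 \<and>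
          (\<forall>x. cdf_of M Z x = \<gamma> * cdf_of M X x + (1 - \<gamma>) * cdf_of M Y x) \<longrightarrow>
          ES_Lambda M \<Lambda> Z \<ge> min (ES_Lambda M \<Lambda> X) (ES_Lambda M \<Lambda> Y))
     \<comment> \<open>(i)\<close>
     \<and> ((\<forall>x. \<Lambda> x < 1) \<longrightarrow>
          (\<forall>X Xs. X \<in> Linf M \<and> (\<forall>n. Xs n \<in> Linf M) \<and>
             (\<lambda>n. \<integral>\<omega>. \<bar>Xs n \<omega> - X \<omega>\<bar> \<partial>M) \<longlonglongrightarrow> 0 \<longrightarrow>
             (\<lambda>n. ES_Lambda M \<Lambda> (Xs n)) \<longlonglongrightarrow> ES_Lambda M \<Lambda> X))"
proof -
  note P = assms(1)
  interpret prob_space M by (rule P)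
  have L: "\<And>x. 0 \<le> \<Lambda> x \<and> \<Lambda> x \<le> 1" by (rule assms(4))
  have L': "\<And>x. 0 \<le> \<Lambda>' x \<and> \<Lambda>' x \<le> 1" by (rule assms(6))
  have am: "antimono \<Lambda>" by (rule assms(3))
  have bd: "\<exists>C. bdd_rv M X C" if "X \<in> Linf M" for X using Linf_bdd[OF P that] .
  have amE: "ES M (\<Lambda> y) X \<le> ES M (\<Lambda> x) X" if "x \<le> y" "bdd_rv M X C" for x y X C
  proof -
    have "\<Lambda> y \<le> \<Lambda> x" using am that(1) by (auto dest: antimonoD)
    then show ?thesis using bdd_rv.ES_mono_alpha[OF that(2)] L[of x] L[of y] by auto
  qed
  have a: "(\<forall>x. \<Lambda> x \<ge> \<Lambda>' x) \<longrightarrow> (\<forall>X\<in>Linf M. ES_Lambda M \<Lambda> X \<ge> ES_Lambda M \<Lambda>' X)"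
  proof (intro impI ballI)
    fix X assume ge: "\<forall>x. \<Lambda>' x \<le> \<Lambda> x" and X: "X \<in> Linf M"
    obtain C where C: "bdd_rv M X C" using bd[OF X] by blast
    show "ES_Lambda M \<Lambda>' X \<le> ES_Lambda M \<Lambda> X"
    proof (rule ESL_mono_pt[OF C L L'])
      fix x show "ES M (\<Lambda>' x) X \<le> ES M (\<Lambda> x) X"
        using bdd_rv.ES_mono_alpha[OF C, of "\<Lambda>' x" "\<Lambda> x"] L[of x] L'[of x] ge by auto
    qed
  qed
  have b: "\<forall>X\<in>Linf M. \<forall>Y\<in>Linf M. (AE \<omega> in M. X \<omega> \<ge> Y \<omega>) \<longrightarrow>
          ES_Lambda M \<Lambda> X \<ge> ES_Lambda M \<Lambda> Y"
  proof (intro ballI impI)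
    fix X Y assume X: "X \<in> Linf M" and Y: "Y \<in> Linf M" and ae: "AE \<omega> in M. X \<omega> \<ge> Y \<omega>"
    obtain Cx where CX: "bdd_rv M X Cx" using bd[OF X] by blast
    obtain Cy where CY: "bdd_rv M Y Cy" using bd[OF Y] by blast
    show "ES_Lambda M \<Lambda> Y \<le> ES_Lambda M \<Lambda> X"
    proof (rule ESL_mono_pt[OF CX L L])
      fix x show "ES M (\<Lambda> x) Y \<le> ES M (\<Lambda> x) X"
        using ES_EPdom[OF CX CY EP_AEdom[OF CX CY ae]] L[of x] by auto
    qed
  qed
  have c: "\<forall>X\<in>Linf M. ereal (ES_Lambda M \<Lambda> X) \<ge> VaR_Lambda M \<Lambda> X"
  proof
    fix X assume X: "X \<in> Linf M"
    obtain C where C: "bdd_rv M X C" using bd[OF X] by blast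
    show "ereal (ES_Lambda M \<Lambda> X) \<ge> VaR_Lambda M \<Lambda> X" by (rule ESL_VaR[OF C L])
  qed
  have d: "\<forall>X\<in>Linf M. \<forall>Y\<in>Linf M. \<forall>\<gamma>::real. 0 \<le> \<gamma> \<and> \<gamma> \<le> 1 \<longrightarrow>
          ES_Lambda M \<Lambda> (\<lambda>\<omega>. \<gamma> * X \<omega> + (1 - \<gamma>) * Y \<omega>)
            \<le> max (ES_Lambda M \<Lambda> X) (ES_Lambda M \<Lambda> Y)"
  proof (intro ballI allI impI)
    fix X Y and \<gamma> :: real assume X: "X \<in> Linf M" and Y: "Y \<in> Linf M" and g: "0 \<le> \<gamma> \<and> \<gamma> \<le> 1"
    obtain Cx where CX: "bdd_rv M X Cx" using bd[OF X] by blast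
    obtain Cy where CY: "bdd_rv M Y Cy" using bd[OF Y] by blast
    have g1: "0 \<le> \<gamma>" "\<gamma> \<le> 1" using g by auto
    note CZ = bdd_rv_conv[OF CX CY g1]
    show "ES_Lambda M \<Lambda> (\<lambda>\<omega>. \<gamma> * X \<omega> + (1 - \<gamma>) * Y \<omega>) \<le> max (ES_Lambda M \<Lambda> X) (ES_Lambda M \<Lambda> Y)"
    proof (rule ESL_least)
      fix x
      have e: "ES M (\<Lambda> x) (\<lambda>\<omega>. \<gamma> * X \<omega> + (1 - \<gamma>) * Y \<omega>) \<le> max (ES M (\<Lambda> x) X) (ES M (\<Lambda> x) Y)"
        using ES_conv[OF CX CY CZ g1 EP_conv[OF CX CY g1]] L[of x] by auto
      have ux: "min (ES M (\<Lambda> x) X) x \<le> ES_Lambda M \<Lambda> X" by (rule ESL_upper[OF CX L])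
      have uy: "min (ES M (\<Lambda> x) Y) x \<le> ES_Lambda M \<Lambda> Y" by (rule ESL_upper[OF CY L])
      show "min (ES M (\<Lambda> x) (\<lambda>\<omega>. \<gamma> * X \<omega> + (1 - \<gamma>) * Y \<omega>)) x \<le> max (ES_Lambda M \<Lambda> X) (ES_Lambda M \<Lambda> Y)"
        using e ux uy by (auto simp: min_def max_def split: if_splits)
    qed
  qed
  have e: "\<forall>t::real. ES_Lambda M \<Lambda> (\<lambda>\<omega>. t) = t"
  proof
    fix t :: real
    have T: "bdd_rv M (\<lambda>\<omega>. t) \<bar>t\<bar>" by (rule bdd_rv_const[OF P])
    have E: "ES M (\<Lambda> x) (\<lambda>\<omega>. t) = t" for x using ES_const[OF P] L[of x] by auto
    have "ES_Lambda M \<Lambda> (\<lambda>\<omega>. t) \<le> t" by (rule ESL_least) (simp add: E)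
    moreover have "min (ES M (\<Lambda> t) (\<lambda>\<omega>. t)) t \<le> ES_Lambda M \<Lambda> (\<lambda>\<omega>. t)" by (rule ESL_upper[OF T L])
    ultimately show "ES_Lambda M \<Lambda> (\<lambda>\<omega>. t) = t" by (simp add: E)
  qed
  have f: "\<forall>X\<in>Linf M. \<forall>m::real. m \<ge> 0 \<longrightarrow>
          ES_Lambda M \<Lambda> (\<lambda>\<omega>. X \<omega> + m) \<le> ES_Lambda M \<Lambda> X + m"
  proof (intro ballI allI impI)
    fix X and m :: real assume X: "X \<in> Linf M" and m: "0 \<le> m"
    obtain C where C: "bdd_rv M X C" using bd[OF X] by blast
    show "ES_Lambda M \<Lambda> (\<lambda>\<omega>. X \<omega> + m) \<le> ES_Lambda M \<Lambda> X + m"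
    proof (rule ESL_least)
      fix x
      have 1: "ES M (\<Lambda> x) (\<lambda>\<omega>. X \<omega> + m) \<le> ES M (\<Lambda> x) X + m" using ES_shift[OF C] L[of x] by auto
      have 2: "ES M (\<Lambda> x) X \<le> ES M (\<Lambda> (x - m)) X" by (rule amE[OF _ C]) (use m in simp)
      have 3: "min (ES M (\<Lambda> (x - m)) X) (x - m) \<le> ES_Lambda M \<Lambda> X"
        by (rule ESL_upper[OF C L])
      show "min (ES M (\<Lambda> x) (\<lambda>\<omega>. X \<omega> + m)) x \<le> ES_Lambda M \<Lambda> X + m"
        using 1 2 3 by (auto simp: min_def split: if_splits)
    qed
  qed
  have g: "\<forall>X\<in>Linf M. \<forall>Y\<in>Linf M. icx_ge M X Y \<longrightarrow>
          ES_Lambda M \<Lambda> X \<ge> ES_Lambda M \<Lambda> Y"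
  proof (intro ballI impI)
    fix X Y assume X: "X \<in> Linf M" and Y: "Y \<in> Linf M" and icx: "icx_ge M X Y"
    obtain Cx where CX: "bdd_rv M X Cx" using bd[OF X] by blast
    obtain Cy where CY: "bdd_rv M Y Cy" using bd[OF Y] by blast
    show "ES_Lambda M \<Lambda> Y \<le> ES_Lambda M \<Lambda> X"
    proof (rule ESL_mono_pt[OF CX L L])
      fix x show "ES M (\<Lambda> x) Y \<le> ES M (\<Lambda> x) X"
        using ES_EPdom[OF CX CY EP_icx[OF icx]] L[of x] by auto
    qed
  qed
  have h: "\<forall>X\<in>Linf M. \<forall>Y\<in>Linf M. \<forall>Z\<in>Linf M. \<forall>\<gamma>::real. 0 \<le> \<gamma> \<and> \<gamma> \<le> 1 \<and>
          (\<forall>x. cdf_of M Z x = \<gamma> * cdf_of M X x + (1 - \<gamma>) * cdf_of M Y x) \<longrightarrow>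
          ES_Lambda M \<Lambda> Z \<ge> min (ES_Lambda M \<Lambda> X) (ES_Lambda M \<Lambda> Y)"
  proof (intro ballI allI impI)
    fix X Y Z and \<gamma> :: real
    assume X: "X \<in> Linf M" and Y: "Y \<in> Linf M" and Z: "Z \<in> Linf M"
      and hyp: "0 \<le> \<gamma> \<and> \<gamma> \<le> 1 \<and> (\<forall>x. cdf_of M Z x = \<gamma> * cdf_of M X x + (1 - \<gamma>) * cdf_of M Y x)"
    obtain Cx where CX: "bdd_rv M X Cx" using bd[OF X] by blast
    obtain Cy where CY: "bdd_rv M Y Cy" using bd[OF Y] by blast
    obtain Cz where CZ: "bdd_rv M Z Cz" using bd[OF Z] by blast
    have g1: "0 \<le> \<gamma>" "\<gamma> \<le> 1" using hyp by auto
    have cdf: "\<And>x. cdf_of M Z x = \<gamma> * cdf_of M X x + (1 - \<gamma>) * cdf_of M Y x" using hyp by auto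
    have pt: "min (ES M (\<Lambda> x) X) (ES M (\<Lambda> x) Y) \<le> ES M (\<Lambda> x) Z" for x
      using ES_mixc[OF CX CY CZ g1 EP_mix[OF CX CY CZ g1 cdf]] L[of x] by auto
    show "min (ES_Lambda M \<Lambda> X) (ES_Lambda M \<Lambda> Y) \<le> ES_Lambda M \<Lambda> Z"
    proof (rule ccontr)
      let ?s = "ES_Lambda M \<Lambda> Z"
      assume "\<not> min (ES_Lambda M \<Lambda> X) (ES_Lambda M \<Lambda> Y) \<le> ?s"
      then have sx: "?s < ES_Lambda M \<Lambda> X" and sy: "?s < ES_Lambda M \<Lambda> Y" by auto
      obtain x1 where x1: "?s < min (ES M (\<Lambda> x1) X) x1"
        using sx unfolding ES_Lambda_def[of M \<Lambda> X] less_cSUP_iff[OF UNIV_not_empty ESL_bdd[OF CX L]] by blast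
      obtain x2 where x2: "?s < min (ES M (\<Lambda> x2) Y) x2"
        using sy unfolding ES_Lambda_def[of M \<Lambda> Y] less_cSUP_iff[OF UNIV_not_empty ESL_bdd[OF CY L]] by blast
      define x where "x = min x1 x2"
      have "ES M (\<Lambda> x1) X \<le> ES M (\<Lambda> x) X" by (rule amE[OF _ CX]) (simp add: x_def)
      moreover have "ES M (\<Lambda> x2) Y \<le> ES M (\<Lambda> x) Y" by (rule amE[OF _ CY]) (simp add: x_def)
      ultimately have "?s < min (ES M (\<Lambda> x) Z) x" using x1 x2 pt[of x] unfolding x_def
        by (auto simp: min_def split: if_splits)
      moreover have "min (ES M (\<Lambda> x) Z) x \<le> ?s" by (rule ESL_upper[OF CZ L])
      ultimately show False by (simp add: min_def split: if_splits)
    qed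
  qed
  have i: "(\<forall>x. \<Lambda> x < 1) \<longrightarrow>
          (\<forall>X Xs. X \<in> Linf M \<and> (\<forall>n. Xs n \<in> Linf M) \<and>
             (\<lambda>n. \<integral>\<omega>. \<bar>Xs n \<omega> - X \<omega>\<bar> \<partial>M) \<longlonglongrightarrow> 0 \<longrightarrow>
             (\<lambda>n. ES_Lambda M \<Lambda> (Xs n)) \<longlonglongrightarrow> ES_Lambda M \<Lambda> X)"
  proof (intro impI allI)
    fix X and Xs :: "nat \<Rightarrow> 'a \<Rightarrow> real"
    assume L1: "\<forall>x. \<Lambda> x < 1"
      and hyp: "X \<in> Linf M \<and> (\<forall>n. Xs n \<in> Linf M) \<and> (\<lambda>n. \<integral>\<omega>. \<bar>Xs n \<omega> - X \<omega>\<bar> \<partial>M) \<longlonglongrightarrow> 0"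
    obtain C where C: "bdd_rv M X C" using bd hyp by blast
    have "\<forall>n. \<exists>C. bdd_rv M (Xs n) C" using bd hyp by blast
    then obtain Cs where Cs: "\<And>n. bdd_rv M (Xs n) (Cs n)" by metis
    define k where "k = 1 - \<Lambda> (- C - 1)"
    have D: "(\<lambda>n. (\<integral>\<omega>. \<bar>Xs n \<omega> - X \<omega>\<bar> \<partial>M) / k) \<longlonglongrightarrow> 0"
      using hyp by (intro tendsto_divide_zero) auto
    have ev: "eventually (\<lambda>n. (\<integral>\<omega>. \<bar>Xs n \<omega> - X \<omega>\<bar> \<partial>M) / k < 1) sequentially"
      using order_tendstoD(2)[OF D, of 1] by simp
    have ev2: "eventually (\<lambda>n. norm (ES_Lambda M \<Lambda> (Xs n) - ES_Lambda M \<Lambda> X) \<le> (\<integral>\<omega>. \<bar>Xs n \<omega> - X \<omega>\<bar> \<partial>M) / k) sequentially"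
      using ev
    proof eventually_elim
      case (elim n)
      show ?case using ESL_close[OF C Cs[of n] L _ am] L1 elim unfolding k_def by simp
    qed
    have "(\<lambda>n. ES_Lambda M \<Lambda> (Xs n) - ES_Lambda M \<Lambda> X) \<longlonglongrightarrow> 0"
      by (rule Lim_null_comparison[OF ev2 D])
    then show "(\<lambda>n. ES_Lambda M \<Lambda> (Xs n)) \<longlonglongrightarrow> ES_Lambda M \<Lambda> X"
      by (rule LIM_zero_cancel)
  qed
  show ?thesis using a b c d e f g h i by (intro conjI) assumption+
qed

end
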